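(* Let $N\geq 2$ be an integer. For real $\theta$ and $\varepsilon\geq 0$ let $G_\theta(\varepsilon)=(1+\theta)^N+\big(1-\theta(1+\varepsilon)\big)^N-2$ and $\varepsilon_c(\theta)=\inf\{\varepsilon>0: G_\theta(\varepsilon)\leq 0\}$ (with $\inf\emptyset=+\infty$). For positive $\theta\neq 2^{1/N}-1$ define $$f(\theta)=\big(2-(1+\theta)^N\big)^{1/N}-1+\theta(1+\theta)^{N-1}\big(2-(1+\theta)^N\big)^{\frac1N-1}.$$ Then on the interval $0<\theta<2^{1/N}-1$ the function $\varepsilon_c$ is differentiable and monotonically increasing, with derivative $$\varepsilon_c'(\theta)=\frac{f(\theta)}{\theta^2}.$$
   Context: Root convention: for real $X>0$, $X^{1/N}$ is the positive real $N$-th root; for $X<0$ and $N$ odd, $X^{1/N}=-|X|^{1/N}$; and for an integer $m$, $X^{1/N-m}$ is defined as $Y^{1/N}$ with $Y=X^{1-mN}$, evaluated by the same convention. On the interval $0<\theta<2^{1/N}-1$ one has $2-(1+\theta)^N>0$, so all roots are ordinary positive roots. *)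

theory Defs
  imports "HOL-Analysis.Analysis"
begin

definition G :: "nat \<Rightarrow> real \<Rightarrow> real \<Rightarrow> real" where
  "G N \<theta> \<epsilon> = (1 + \<theta>) ^ N + (1 - \<theta> * (1 + \<epsilon>)) ^ N - 2"

text \<open>Infimum in the extended reals, so that the infimum of the empty set is +infinity.\<close>
definition eps_c :: "nat \<Rightarrow> real \<Rightarrow> ereal" where
  "eps_c N \<theta> = Inf (ereal ` {\<epsilon>. \<epsilon> > 0 \<and> G N \<theta> \<epsilon> \<le> 0})"

text \<open>Root convention: root N is the real N-th root (sign preserving);
  X^(1/N - 1) is root N of X^(1-N) = inverse (X^(N-1)).\<close>
definition f :: "nat \<Rightarrow> real \<Rightarrow> real" where
  "f N \<theta> = root N (2 - (1 + \<theta>) ^ N) - 1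
     + \<theta> * (1 + \<theta>) ^ (N - 1) * root N (inverse ((2 - (1 + \<theta>) ^ N) ^ (N - 1)))"

end

theory Submission
  imports Defs
begin

lemma sum_pow_gt2:
  fixes t :: real
  assumes "0 < t" "t < 1" "2 \<le> n"
  shows "2 < (1+t)^n + (1-t)^n"
  using assms(3)
proof (induction n rule: dec_induct)
  case base
  then show ?case using assms by (simp add: power2_eq_square algebra_simps)
next
  case (step m)
  have "(1-t)^m \<le> (1+t)^m" using assms by (intro power_mono) auto
  then have "0 \<le> t * ((1+t)^m - (1-t)^m)" using assms by simp
  moreover have "(1+t)^Suc m + (1-t)^Suc m = (1+t)^m + (1-t)^m + t * ((1+t)^m - (1-t)^m)"
    by (simp add: algebra_simps)
  ultimately show ?case using step by linarith
qed

lemma amgm: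
  fixes t :: real
  assumes "0 \<le> t"
  shows "real (Suc n) * t^n \<le> real n * t^(Suc n) + 1"
proof (induction n)
  case 0
  then show ?case by simp
next
  case (Suc n)
  have ih: "real (Suc n) * t^Suc n \<le> real n * t^(Suc (Suc n)) + t"
    using mult_right_mono[OF Suc assms] by (simp add: algebra_simps)
  have "0 \<le> (1 - t) * (1 - t^Suc n)"
  proof (cases "t \<le> 1")
    case True
    then have "t^Suc n \<le> 1" using assms by (metis power_le_one)
    then show ?thesis using True by simp
  next
    case False
    then have "1 \<le> t^Suc n" by (intro one_le_power) simp
    then show ?thesis using False by (simp add: mult_nonpos_nonpos)
  qed
  then have "t + t^Suc n \<le> t^Suc (Suc n) + 1" by (simp add: algebra_simps)
  with ih show ?case by (simp add: algebra_simps)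
qed

lemma basic:
  assumes N: "N \<ge> 2" and t: "0 < t" "t < root N 2 - 1"
  shows "t < 1" "0 < 2 - (1+t)^N" "2 - (1+t)^N < (1-t)^N"
    "0 < root N (2 - (1+t)^N)" "root N (2 - (1+t)^N) < 1 - t"
proof -
  have "(1+t)^N < root N 2 ^ N"
    using t N by (intro power_strict_mono) auto
  also have "\<dots> = 2" using N by (simp add: real_root_pow_pos2)
  finally have lt: "(1+t)^N < 2" .
  have "1 + real N * t \<le> (1+t)^N" using t by (intro Bernoulli_inequality) auto
  moreover have "2 * t \<le> real N * t" using N t by (intro mult_right_mono) auto
  ultimately show t1: "t < 1" using lt by linarith
  show A: "0 < 2 - (1+t)^N" using lt by simp
  show B: "2 - (1+t)^N < (1-t)^N" using sum_pow_gt2[OF t(1) t1 N] by simp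
  show "0 < root N (2 - (1+t)^N)" using A N by simp
  have "root N (2 - (1+t)^N) < root N ((1-t)^N)" using B N by simp
  also have "\<dots> = 1 - t" using N t1 by (simp add: real_root_pos2)
  finally show "root N (2 - (1+t)^N) < 1 - t" .
qed

definition e :: "nat \<Rightarrow> real \<Rightarrow> real" where
  "e N t = (1 - root N (2 - (1+t)^N)) / t - 1"

lemma eps_c_eq:
  assumes N: "N \<ge> 2" and t: "0 < t" "t < root N 2 - 1"
  shows "eps_c N t = ereal (e N t)"
proof -
  note b = basic[OF assms]
  define A where "A = 2 - (1+t)^N"
  define a where "a = root N A"
  have aN: "a ^ N = A" unfolding a_def using b(2) N by (simp add: A_def real_root_pow_pos2)
  have a0: "0 < a" "a < 1 - t" using b unfolding a_def A_def by auto
  have eq: "1 - t * (1 + e N t) = a"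
    using t unfolding e_def a_def A_def by (simp add: field_simps)
  have epos: "0 < e N t" unfolding e_def using a0 t unfolding a_def A_def
    by (simp add: field_simps)
  define S where "S = {\<epsilon>. \<epsilon> > 0 \<and> G N t \<epsilon> \<le> 0}"
  have mem: "e N t \<in> S" unfolding S_def G_def using epos eq aN by (simp add: A_def)
  have low: "e N t \<le> x" if "x \<in> S" for x
  proof (rule ccontr)
    assume "\<not> e N t \<le> x"
    then have "a < 1 - t * (1 + x)" using t eq
      by (smt (verit, best) mult_strict_left_mono)
    then have "a ^ N < (1 - t * (1 + x))^N" using a0 N by (intro power_strict_mono) auto
    then have "G N t x > 0" unfolding G_def using aN by (simp add: A_def)
    then show False using that unfolding S_def by auto
  qed
  have "eps_c N t = Inf (ereal ` S)" unfolding eps_c_def S_def by simp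
  also have "\<dots> = ereal (e N t)"
  proof (rule antisym)
    show "Inf (ereal ` S) \<le> ereal (e N t)" using mem by (intro Inf_lower) auto
    show "ereal (e N t) \<le> Inf (ereal ` S)" using low by (intro Inf_greatest) auto
  qed
  finally show ?thesis .
qed

lemma f_alt:
  assumes N: "N \<ge> 2" and t: "0 < t" "t < root N 2 - 1"
  shows "f N t = root N (2 - (1+t)^N) - 1 + t * (1+t)^(N-1) / root N (2 - (1+t)^N) ^ (N-1)"
  unfolding f_def using N by (simp add: real_root_inverse real_root_power divide_inverse)

lemma f_nonneg:
  assumes N: "N \<ge> 2" and t: "0 < t" "t < root N 2 - 1"
  shows "0 \<le> f N t"
proof -
  note b = basic[OF assms]
  define a where "a = root N (2 - (1+t)^N)"
  define x where "x = 1 + t"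
  have aN: "a ^ N = 2 - x^N" unfolding a_def x_def using b(2) N by (simp add: real_root_pow_pos2)
  have a0: "0 < a" using b a_def by auto
  have x0: "0 \<le> x" using t x_def by simp
  obtain m where m: "N = Suc m" using N by (cases N) auto
  have h1: "real (Suc m) * a^m \<le> real m * a^(Suc m) + 1" using a0 by (intro amgm) simp
  have h2: "real (Suc m) * x^m \<le> real m * x^(Suc m) + 1" using x0 by (intro amgm) simp
  have "real (Suc m) * (a^m + x^m) \<le> real m * (a^Suc m + x ^ Suc m) + 2"
    using h1 h2 by (simp add: algebra_simps)
  also have "\<dots> = real (Suc m) * 2" using aN m by simp
  finally have key: "a^m + x^m \<le> 2" by (simp only: mult_le_cancel_left_pos of_nat_0_less_iff zero_less_Suc)
  have "0 \<le> a^Suc m - a^m + x^Suc m - x^m" using key aN m by simp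
  also have "a^Suc m - a^m + x^Suc m - x^m = ((a - 1) * a^m + t * x^m)"
    unfolding x_def by (simp add: algebra_simps)
  finally have "0 \<le> ((a - 1) * a^m + t * x^m) / a^m" using a0 by simp
  also have "\<dots> = f N t" using f_alt[OF assms] a0 m unfolding a_def[symmetric] x_def
    by (simp add: field_simps)
  finally show ?thesis .
qed

lemma e_deriv:
  assumes N: "N \<ge> 2" and t: "0 < t" "t < root N 2 - 1"
  shows "(e N has_real_derivative f N t / t^2) (at t)"
proof -
  note b = basic[OF assms]
  define a where "a = root N (2 - (1+t)^N)"
  have a0: "0 < a" using b a_def by auto
  have d1: "((\<lambda>s. 2 - (1+s)^N) has_real_derivative -(real N * (1+t)^(N-1))) (at t)"
    by (auto intro!: derivative_eq_intros)
  have d2: "((\<lambda>s. root N (2 - (1+s)^N)) has_real_derivative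
      inverse (real N * a^(N - Suc 0)) * -(real N * (1+t)^(N-1))) (at t)"
    unfolding a_def using DERIV_chain2[OF DERIV_real_root d1] N b(2) by simp
  have "e N = (\<lambda>s. (1 - root N (2 - (1+s)^N)) / s - 1)" by (simp add: e_def fun_eq_iff)
  have d3: "((\<lambda>s. (1 - root N (2 - (1+s)^N)) / s - 1) has_real_derivative
     ((0 - inverse (real N * a^(N - Suc 0)) * -(real N * (1+t)^(N-1))) * t - (1 - root N (2 - (1+t)^N)) * 1) / (t * t) - 0) (at t)"
    using t by (intro DERIV_diff DERIV_divide DERIV_const DERIV_ident d2) auto
  moreover have "((0 - inverse (real N * a^(N - Suc 0)) * -(real N * (1+t)^(N-1))) * t - (1 - root N (2 - (1+t)^N)) * 1) / (t * t) - 0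
     = f N t / t^2"
    unfolding f_alt[OF assms] a_def[symmetric] using a0 t N
    by (simp add: field_simps power2_eq_square)
  ultimately have "((\<lambda>s. (1 - root N (2 - (1+s)^N)) / s - 1) has_real_derivative f N t / t^2) (at t)" by simp
  moreover have "e N = (\<lambda>s. (1 - root N (2 - (1+s)^N)) / s - 1)" by (simp add: e_def fun_eq_iff)
  ultimately show ?thesis by simp
qed

theorem lemma2:
  fixes N :: nat
  assumes "N \<ge> 2"
  shows "(\<forall>\<theta>. 0 < \<theta> \<and> \<theta> < root N 2 - 1 \<longrightarrow>
            eps_c N \<theta> \<noteq> \<infinity> \<and>
            ((\<lambda>t. real_of_ereal (eps_c N t)) has_real_derivative f N \<theta> / \<theta>^2) (at \<theta>))
       \<and> mono_on {0<..<root N 2 - 1} (eps_c N)"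
proof (intro conjI allI impI)
  fix th :: real assume th: "0 < th \<and> th < root N 2 - 1"
  show "eps_c N th \<noteq> \<infinity>" using eps_c_eq[OF assms] th by simp
  show "((\<lambda>t. real_of_ereal (eps_c N t)) has_real_derivative f N th / th^2) (at th)"
  proof (rule has_field_derivative_transform_within_open[OF e_deriv[OF assms]])
    show "0 < th" "th < root N 2 - 1" using th by auto
    show "open {0<..<root N 2 - 1}" by simp
    show "th \<in> {0<..<root N 2 - 1}" using th by simp
    show "e N x = real_of_ereal (eps_c N x)" if "x \<in> {0<..<root N 2 - 1}" for x
      using eps_c_eq[OF assms] that by simp
  qed
next
  show "mono_on {0<..<root N 2 - 1} (eps_c N)"
  proof (rule mono_onI)
    fix x y assume xy: "x \<in> {0<..<root N 2 - 1}" "y \<in> {0<..<root N 2 - 1}" "x \<le> y"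
    have dr: "\<And>z. x \<le> z \<Longrightarrow> z \<le> y \<Longrightarrow> (e N has_real_derivative f N z / z^2) (at z)"
      using xy by (intro e_deriv[OF assms]) auto
    have "e N x \<le> e N y"
    proof (rule DERIV_nonneg_imp_increasing_open[OF xy(3)])
      fix z assume "x < z" "z < y"
      then show "\<exists>d. (e N has_real_derivative d) (at z) \<and> 0 \<le> d"
        using dr f_nonneg[OF assms, of z] xy by (intro exI[of _ "f N z / z^2"]) auto
    next
      show "continuous_on {x..y} (e N)"
        using dr by (intro continuous_at_imp_continuous_on ballI DERIV_isCont) auto
    qed
    then show "eps_c N x \<le> eps_c N y" using eps_c_eq[OF assms] xy by simp
  qed
qed

end
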